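(* Let $(P,F)$ be a convex Fuchsian polyhedron in $\mathbb{H}^3$ with invariant plane $\Pi$, and let $Z$ be a Fuchsian deformation of $(P,F)$, with Fuchsian Killing fields $\vec f$ ($f\in F$) such that $Z(fy)=df(\vec f(y)+Z(y))$ for all $y\in P$. Let $Z_h$ be the horizontal component of $Z$. Then $Z_h$ is equivariant under $F$: $Z_h(fy)=df(\vec f(y)+Z_h(y))$ for all $f\in F$ and $y\in P$.
   Context: A convex Fuchsian polyhedron is a pair $(P,F)$ where $P$ is a convex polyhedral surface in $\mathbb{H}^3$ (boundary of a locally finite intersection of half-spaces) and $F$ is a discrete group of orientation-preserving isometries leaving invariant a totally geodesic plane $\Pi$, acting cocompactly without fixed points on $\Pi$, with $F(P)=P$ and $F$ acting freely on $P$. An infinitesimal isometric deformation of $P$ is a triangulation of the faces of $P$ with no new vertices plus a Killing field of $\mathbb{H}^3$ on each triangle, coinciding on common edges; it gives a vector field $Z$ on $P$. A Fuchsian Killing field is the extension of a Killing field $K$ of $\Pi$ defined by: at $x$ at distance $d$ from $\Pi$, with $p_d$ the orthogonal projection onto $\Pi$ of the equidistant surface at distance $d$ through $x$, its value is $(dp_d)^{-1}(K(p_d(x)))$. A Fuchsian deformation is an infinitesimal isometric deformation $Z$ such that for each $f\in F$ there is a Fuchsian Killing field $\vec f$ with $Z(fy)=df(\vec f(y)+Z(y))$ for all $y\in P$. At $x\in P$ the vertical direction is the tangent direction at $x$ of the geodesic through $x$ orthogonal to $\Pi$; horizontal directions are orthogonal to it, and $Z_h$ is the orthogonal projection of $Z$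 onto the horizontal plane. *)

theory Defs
  imports "HOL-Analysis.Analysis"
begin

text \<open>Hyperboloid model of hyperbolic 3-space in Minkowski space R^{3,1}
  (coordinate 1 is the time coordinate).\<close>

type_synonym vec4 = "real ^ 4"
type_synonym mat4 = "real ^ 4 ^ 4"

definition mink :: "vec4 \<Rightarrow> vec4 \<Rightarrow> real" where
  "mink x y = - (x$1 * y$1) + x$2 * y$2 + x$3 * y$3 + x$4 * y$4"

definition H3 :: "vec4 set" where
  "H3 = {x. mink x x = -1 \<and> x$1 > 0}"

text \<open>Orientation-preserving isometries of H3 = orthochronous Lorentz matrices of det 1;
  the isometry acts by x \<mapsto> M x and its differential is v \<mapsto> M v.\<close>
definition isom_plus :: "mat4 \<Rightarrow> bool" where
  "isom_plus M \<longleftrightarrow> (\<forall>x y. mink (M *v x) (M *v y) = mink x y)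
      \<and> (\<lambda>x. M *v x) ` H3 = H3 \<and> det M = 1"

definition so31 :: "mat4 \<Rightarrow> bool" where
  "so31 A \<longleftrightarrow> (\<forall>x y. mink (A *v x) y + mink x (A *v y) = 0)"

definition killing_H3 :: "(vec4 \<Rightarrow> vec4) \<Rightarrow> bool" where
  "killing_H3 K \<longleftrightarrow> (\<exists>A. so31 A \<and> (\<forall>x\<in>H3. K x = A *v x))"

definition unit_spacelike :: "vec4 \<Rightarrow> bool" where
  "unit_spacelike n \<longleftrightarrow> mink n n = 1"

definition hplane :: "vec4 \<Rightarrow> vec4 set" where
  "hplane n = {x\<in>H3. mink n x = 0}"

text \<open>Killing fields of the plane (restrictions to the plane of Killing fields of H3
  preserving it pointwise-normal, i.e. the isometry Lie algebra of the plane).\<close>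
definition killing_plane :: "vec4 \<Rightarrow> (vec4 \<Rightarrow> vec4) \<Rightarrow> bool" where
  "killing_plane n K \<longleftrightarrow> (\<exists>A. so31 A \<and> A *v n = 0 \<and> (\<forall>y\<in>hplane n. K y = A *v y))"

text \<open>Orthogonal projection onto the plane (defined on all of R^4 by this formula).\<close>
definition proj :: "vec4 \<Rightarrow> vec4 \<Rightarrow> vec4" where
  "proj n x = (1 / sqrt (1 + (mink n x)\<^sup>2)) *\<^sub>R (x - mink n x *\<^sub>R n)"

text \<open>Tangent space at x of the equidistant surface through x.\<close>
definition equidist_tangent :: "vec4 \<Rightarrow> vec4 \<Rightarrow> vec4 set" where
  "equidist_tangent n x = {w. mink x w = 0 \<and> mink n w = 0}"

text \<open>Fuchsian extension: value at x is (dp_d)^{-1}(K(p_d x)), where dp_d is the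
  differential at x of the projection restricted to the equidistant surface.\<close>
definition fuchsian_ext :: "vec4 \<Rightarrow> (vec4 \<Rightarrow> vec4) \<Rightarrow> vec4 \<Rightarrow> vec4" where
  "fuchsian_ext n K x = (THE w. w \<in> equidist_tangent n x \<and>
       frechet_derivative (proj n) (at x) w = K (proj n x))"

definition fuchsian_killing :: "vec4 \<Rightarrow> (vec4 \<Rightarrow> vec4) \<Rightarrow> bool" where
  "fuchsian_killing n V \<longleftrightarrow> (\<exists>K. killing_plane n K \<and> (\<forall>x\<in>H3. V x = fuchsian_ext n K x))"

text \<open>Vertical direction at x: velocity at x of the unit-speed geodesic through x
  orthogonal to the plane, t \<mapsto> cosh t p(x) + sinh t n, passing through x at the
  signed distance d = arsinh (mink n x).\<close>
definition vert :: "vec4 \<Rightarrow> vec4 \<Rightarrow> vec4" where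
  "vert n x = vector_derivative (\<lambda>t. cosh t *\<^sub>R proj n x + sinh t *\<^sub>R n)
                 (at (arsinh (mink n x)))"

definition hproj :: "vec4 \<Rightarrow> vec4 \<Rightarrow> vec4 \<Rightarrow> vec4" where
  "hproj n x v = v - (mink v (vert n x) / mink (vert n x) (vert n x)) *\<^sub>R vert n x"

definition halfspace :: "vec4 \<Rightarrow> vec4 set" where
  "halfspace m = {x\<in>H3. mink m x \<le> 0}"

definition polyhedral_surface :: "vec4 set \<Rightarrow> vec4 set \<Rightarrow> bool" where
  "polyhedral_surface Ms P \<longleftrightarrow>
     (\<forall>m\<in>Ms. unit_spacelike m) \<and>
     (\<forall>x\<in>H3. \<exists>e>0. finite {m\<in>Ms. hplane m \<inter> ball x e \<noteq> {}}) \<and>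
     (let C = H3 \<inter> (\<Inter>m\<in>Ms. halfspace m) in
       P = {x\<in>C. \<forall>e>0. \<exists>y\<in>H3 - C. dist x y < e})"

text \<open>Hyperbolic convex hull (radial projection of the Euclidean hull to H3).\<close>
definition hyp_hull :: "vec4 set \<Rightarrow> vec4 set" where
  "hyp_hull S = H3 \<inter> {t *\<^sub>R y | t y. t > 0 \<and> y \<in> convex hull S}"

definition poly_vertex :: "vec4 set \<Rightarrow> vec4 set \<Rightarrow> vec4 \<Rightarrow> bool" where
  "poly_vertex Ms P x \<longleftrightarrow> x \<in> P \<and>
     \<not> (\<exists>a\<in>H3 \<inter> (\<Inter>m\<in>Ms. halfspace m). \<exists>b\<in>H3 \<inter> (\<Inter>m\<in>Ms. halfspace m).
          a \<noteq> b \<and> x \<in> hyp_hull {a, b} - {a, b})"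

text \<open>Infinitesimal isometric deformation: a triangulation of the faces of P with
  vertices among the vertices of P, and a Killing field on each triangle; Z is the
  induced vector field on P (so the Killing fields agree on common edges).\<close>
definition inf_iso_deformation :: "vec4 set \<Rightarrow> vec4 set \<Rightarrow> (vec4 \<Rightarrow> vec4) \<Rightarrow> bool" where
  "inf_iso_deformation Ms P Z \<longleftrightarrow>
     (\<exists>Tri :: vec4 set set. \<exists>K :: vec4 set \<Rightarrow> vec4 \<Rightarrow> vec4.
        (\<forall>V\<in>Tri. card V = 3 \<and> independent V \<and> (\<forall>v\<in>V. poly_vertex Ms P v)
                  \<and> (\<exists>m\<in>Ms. hyp_hull V \<subseteq> P \<inter> hplane m)) \<and>
        (\<forall>V\<in>Tri. \<forall>V'\<in>Tri. hyp_hull V \<inter> hyp_hull V' = hyp_hull (V \<inter> V')) \<and>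
        (\<Union>V\<in>Tri. hyp_hull V) = P \<and>
        (\<forall>V\<in>Tri. killing_H3 (K V) \<and> (\<forall>x\<in>hyp_hull V. Z x = K V x)))"

definition fuchsian_group :: "vec4 \<Rightarrow> mat4 set \<Rightarrow> bool" where
  "fuchsian_group n F \<longleftrightarrow>
     mat 1 \<in> F \<and> (\<forall>M\<in>F. \<forall>M'\<in>F. M ** M' \<in> F) \<and> (\<forall>M\<in>F. matrix_inv M \<in> F) \<and>
     (\<forall>M\<in>F. isom_plus M) \<and>
     (\<forall>M\<in>F. \<exists>e>0. \<forall>M'\<in>F. dist M' M < e \<longrightarrow> M' = M) \<and>
     (\<forall>M\<in>F. (\<lambda>y. M *v y) ` hplane n = hplane n) \<and>
     (\<forall>M\<in>F. \<forall>y\<in>hplane n. M *v y = y \<longrightarrow> M = mat 1) \<and>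
     (\<exists>Kc. compact Kc \<and> Kc \<subseteq> hplane n \<and> hplane n \<subseteq> (\<Union>M\<in>F. (\<lambda>y. M *v y) ` Kc))"

definition convex_fuchsian_polyhedron :: "vec4 \<Rightarrow> vec4 set \<Rightarrow> vec4 set \<Rightarrow> mat4 set \<Rightarrow> bool" where
  "convex_fuchsian_polyhedron n Ms P F \<longleftrightarrow>
     unit_spacelike n \<and> polyhedral_surface Ms P \<and> fuchsian_group n F \<and>
     (\<forall>M\<in>F. (\<lambda>y. M *v y) ` P = P) \<and>
     (\<forall>M\<in>F. \<forall>y\<in>P. M *v y = y \<longrightarrow> M = mat 1)"

definition fuchsian_deformation ::
  "vec4 \<Rightarrow> vec4 set \<Rightarrow> vec4 set \<Rightarrow> mat4 set \<Rightarrow> (vec4 \<Rightarrow> vec4) \<Rightarrow> (mat4 \<Rightarrow> vec4 \<Rightarrow> vec4) \<Rightarrow> bool" where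
  "fuchsian_deformation n Ms P F Z Fv \<longleftrightarrow>
     inf_iso_deformation Ms P Z \<and>
     (\<forall>M\<in>F. fuchsian_killing n (Fv M) \<and>
        (\<forall>y\<in>P. Z (M *v y) = M *v (Fv M y + Z y)))"

end

theory Submission imports Defs begin

lemma mink_sym: "mink x y = mink y x" unfolding mink_def by (simp add: algebra_simps)
lemma mink_add_right: "mink x (y + z) = mink x y + mink x z" unfolding mink_def by (simp add: algebra_simps)
lemma mink_add_left: "mink (y + z) x = mink y x + mink z x" unfolding mink_def by (simp add: algebra_simps)
lemma mink_diff_right: "mink x (y - z) = mink x y - mink x z" unfolding mink_def by (simp add: algebra_simps)
lemma mink_diff_left: "mink (y - z) x = mink y x - mink z x" unfolding mink_def by (simp add: algebra_simps)
lemma mink_scale_right: "mink x (c *\<^sub>R y) = c * mink x y" unfolding mink_def by (simp add: algebra_simps)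
lemma mink_scale_left: "mink (c *\<^sub>R y) x = c * mink y x" unfolding mink_def by (simp add: algebra_simps)
lemma mink_zero_right: "mink x 0 = 0" unfolding mink_def by simp
lemma mink_zero_left: "mink 0 x = 0" unfolding mink_def by simp
lemmas mink_simps = mink_add_right mink_add_left mink_diff_right mink_diff_left mink_scale_right
  mink_scale_left mink_zero_right mink_zero_left

lemma cs3: fixes a b c x y z :: real
  shows "(a*x+b*y+c*z)^2 \<le> (a^2+b^2+c^2)*(x^2+y^2+z^2)"
proof -
  have "(a^2+b^2+c^2)*(x^2+y^2+z^2) - (a*x+b*y+c*z)^2 = (a*y-b*x)^2 + (a*z-c*x)^2 + (b*z-c*y)^2"
    by (simp add: power2_eq_square algebra_simps)
  moreover have "(a*y-b*x)^2 + (a*z-c*x)^2 + (b*z-c*y)^2 \<ge> 0" by simp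
  ultimately show ?thesis by linarith
qed

lemma sheet:
  assumes "mink a a = -1" "mink b b = -1" "a$1 > 0" "mink a b \<le> 0"
  shows "b$1 > 0"
proof (rule ccontr)
  assume nb: "\<not> b$1 > 0"
  let ?A = "(a$2)^2+(a$3)^2+(a$4)^2" and ?B = "(b$2)^2+(b$3)^2+(b$4)^2"
  let ?S = "a$2*b$2+a$3*b$3+a$4*b$4"
  have ha: "(a$1)^2 = 1 + ?A" using assms(1) unfolding mink_def by (simp add: power2_eq_square)
  have hb: "(b$1)^2 = 1 + ?B" using assms(2) unfolding mink_def by (simp add: power2_eq_square)
  have cs: "?S^2 \<le> ?A * ?B" by (rule cs3)
  have "((a$1) * (-(b$1)))^2 = (1 + ?A) * (1 + ?B)" using ha hb by (simp add: power_mult_distrib)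
  also have "\<dots> > ?A * ?B" by (simp add: algebra_simps add_pos_nonneg)
  finally have "?S^2 < ((a$1) * (-(b$1)))^2" using cs by linarith
  moreover have "(a$1) * (-(b$1)) \<ge> 0" using nb assms(3) by (simp add: mult_nonneg_nonpos)
  ultimately have "\<bar>?S\<bar> < (a$1) * (-(b$1))"
    by (metis power2_abs power_less_imp_less_base)
  hence "mink a b > 0" unfolding mink_def by linarith
  thus False using assms(4) by simp
qed

lemma proj_props:
  assumes n: "mink n n = 1" and y: "y \<in> H3"
  defines "d \<equiv> mink n y" and "s \<equiv> sqrt (1 + (mink n y)\<^sup>2)"
  shows "mink (proj n y) (proj n y) = -1" "mink n (proj n y) = 0" "mink y (proj n y) = - s"
    "proj n y \<in> hplane n" "s > 0" "proj n y = (1/s) *\<^sub>R (y - d *\<^sub>R n)"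
proof -
  have yy: "mink y y = -1" using y unfolding H3_def by simp
  have sp: "s > 0" unfolding s_def by (simp add: add_pos_nonneg)
  have s2: "s^2 = 1 + d^2" unfolding s_def d_def by (simp add: add_nonneg_nonneg)
  have pd: "proj n y = (1/s) *\<^sub>R (y - d *\<^sub>R n)" unfolding proj_def s_def d_def by simp
  show "proj n y = (1/s) *\<^sub>R (y - d *\<^sub>R n)" by (rule pd)
  show "s > 0" by (rule sp)
  have m1: "mink (y - d *\<^sub>R n) (y - d *\<^sub>R n) = -1 - d^2"
    using n yy by (simp add: mink_simps mink_sym[of y n] d_def power2_eq_square algebra_simps)
  have "mink (proj n y) (proj n y) = (1/s)^2 * mink (y - d *\<^sub>R n) (y - d *\<^sub>R n)"
    using sp by (simp add: pd mink_simps power2_eq_square field_simps)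
  also have "\<dots> = -1"
  proof -
    have "1 + d^2 > 0" by (simp add: add_pos_nonneg)
    thus ?thesis using m1 s2 sp by (simp add: power_divide field_simps)
  qed
  finally show pp: "mink (proj n y) (proj n y) = -1" .
  show pn: "mink n (proj n y) = 0" using n by (simp add: pd mink_simps d_def)
  have m2: "mink y (y - d *\<^sub>R n) = -1 - d^2"
    using yy by (simp add: mink_simps mink_sym[of y n] d_def power2_eq_square)
  have "mink y (proj n y) = (1/s) * mink y (y - d *\<^sub>R n)"
    by (simp add: pd mink_simps)
  also have "\<dots> = - s" using m2 s2 sp by (simp add: field_simps power2_eq_square)
  finally show yp: "mink y (proj n y) = - s" .
  have "(proj n y)$1 > 0"
    by (rule sheet[of y]) (use yy pp yp y sp in \<open>auto simp: H3_def\<close>)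
  thus "proj n y \<in> hplane n" using pp pn by (simp add: hplane_def H3_def)
qed

lemma vert_eq: "vert n x = mink n x *\<^sub>R proj n x + sqrt (1 + (mink n x)\<^sup>2) *\<^sub>R n"
proof -
  have "((\<lambda>t. cosh t *\<^sub>R proj n x + sinh t *\<^sub>R n) has_vector_derivative
     (sinh (arsinh (mink n x)) *\<^sub>R proj n x + cosh (arsinh (mink n x)) *\<^sub>R n)) (at (arsinh (mink n x)))"
    by (auto intro!: derivative_eq_intros)
  hence "vert n x = sinh (arsinh (mink n x)) *\<^sub>R proj n x + cosh (arsinh (mink n x)) *\<^sub>R n"
    unfolding vert_def by (rule vector_derivative_at)
  thus ?thesis by (simp add: cosh_arsinh_real add.commute)
qed

lemma mink_bl: "bounded_linear (mink n)"
  unfolding mink_def by (auto intro!: bounded_linear_intros)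

lemma proj_deriv:
  assumes "mink n w = 0"
  shows "frechet_derivative (proj n) (at y) w = (1 / sqrt (1 + (mink n y)\<^sup>2)) *\<^sub>R w"
proof -
  have md: "(mink n has_derivative mink n) (at y)"
    by (rule bounded_linear.has_derivative[OF mink_bl]) (rule has_derivative_ident)
  define d where "d = mink n y"
  have h1: "((\<lambda>m. 1 + m\<^sup>2) has_real_derivative 2 * d) (at d)"
    by (auto intro!: derivative_eq_intros)
  have pos: "0 < 1 + d\<^sup>2" by (simp add: add_pos_nonneg)
  have h2: "((\<lambda>m. sqrt (1 + m\<^sup>2)) has_real_derivative inverse (sqrt (1 + d\<^sup>2)) / 2 * (2 * d)) (at d)"
    by (rule DERIV_chain2[OF DERIV_real_sqrt[OF pos] h1])
  have h3: "((\<lambda>m. inverse (sqrt (1 + m\<^sup>2))) has_real_derivative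
      - (inverse (sqrt (1 + d\<^sup>2)) / 2 * (2 * d) * inverse ((sqrt (1 + d\<^sup>2)) ^ Suc (Suc 0)))) (at d)"
    by (rule DERIV_inverse_fun[OF h2]) (use pos in simp)
  have ee: "(\<lambda>m. 1 / sqrt (1 + m\<^sup>2)) = (\<lambda>m::real. inverse (sqrt (1 + m\<^sup>2)))"
    by (simp add: divide_inverse)
  obtain c where c: "((\<lambda>m. 1 / sqrt (1 + m\<^sup>2)) has_real_derivative c) (at (mink n y))"
    using h3 unfolding d_def ee by blast
  have f: "((\<lambda>x. 1 / sqrt (1 + (mink n x)\<^sup>2)) has_derivative (\<lambda>h. mink n h * c)) (at y)"
    using DERIV_compose_FDERIV[OF c md] .
  have g: "((\<lambda>x. x - mink n x *\<^sub>R n) has_derivative (\<lambda>h. h - mink n h *\<^sub>R n)) (at y)"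
    by (rule has_derivative_diff[OF has_derivative_ident has_derivative_scaleR_left[OF md]])
  have "(proj n has_derivative (\<lambda>h. (1 / sqrt (1 + (mink n y)\<^sup>2)) *\<^sub>R (h - mink n h *\<^sub>R n)
      + (mink n h * c) *\<^sub>R (y - mink n y *\<^sub>R n))) (at y)"
    unfolding proj_def[abs_def] using has_derivative_scaleR[OF f g] by (simp only: add.commute)
  hence "frechet_derivative (proj n) (at y) = (\<lambda>h. (1 / sqrt (1 + (mink n y)\<^sup>2)) *\<^sub>R (h - mink n h *\<^sub>R n)
      + (mink n h * c) *\<^sub>R (y - mink n y *\<^sub>R n))"
    by (rule frechet_derivative_at[symmetric])
  thus ?thesis using assms by simp
qed

lemma fext:
  assumes n: "mink n n = 1" and y: "y \<in> H3" and K: "killing_plane n K"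
  shows "mink y (fuchsian_ext n K y) = 0 \<and> mink n (fuchsian_ext n K y) = 0"
proof -
  obtain A where A: "so31 A" "A *v n = 0" "\<forall>z\<in>hplane n. K z = A *v z"
    using K unfolding killing_plane_def by blast
  define d where "d = mink n y"
  define s where "s = sqrt (1 + (mink n y)\<^sup>2)"
  define p where "p = proj n y"
  have sp: "s > 0" and ph: "p \<in> hplane n" and pd: "p = (1/s) *\<^sub>R (y - d *\<^sub>R n)"
    using proj_props[OF n y] unfolding s_def d_def p_def by auto
  have "s *\<^sub>R p = y - d *\<^sub>R n" using sp pd by simp
  hence yeq: "y = s *\<^sub>R p + d *\<^sub>R n" by (simp add: algebra_simps)
  have so: "\<And>x z. mink (A *v x) z + mink x (A *v z) = 0" using A(1) unfolding so31_def by blast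
  have a1: "mink n (A *v p) = 0" using so[of n p] A(2) by (simp add: mink_simps)
  have a2: "mink p (A *v p) = 0" using so[of p p] mink_sym[of "A *v p" p] by simp
  have a3: "mink y (A *v p) = 0" unfolding yeq by (simp add: mink_simps a1 a2)
  define w0 where "w0 = s *\<^sub>R (A *v p)"
  let ?P = "\<lambda>w. w \<in> equidist_tangent n y \<and> frechet_derivative (proj n) (at y) w = K (proj n y)"
  have t0: "mink n w0 = 0" "mink y w0 = 0" unfolding w0_def by (simp_all add: mink_simps a1 a3)
  have "frechet_derivative (proj n) (at y) w0 = (1/s) *\<^sub>R w0"
    using proj_deriv[of n w0 y, OF t0(1)] unfolding s_def .
  also have "\<dots> = A *v p" unfolding w0_def using sp by simp
  also have "\<dots> = K (proj n y)" using A(3) ph unfolding p_def by simp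
  finally have P0: "?P w0" using t0 unfolding equidist_tangent_def by simp
  have uniq: "w = w0" if "?P w" for w
  proof -
    have "mink n w = 0" using that unfolding equidist_tangent_def by simp
    hence "frechet_derivative (proj n) (at y) w = (1/s) *\<^sub>R w"
      using proj_deriv[of n w y] unfolding s_def by blast
    hence "(1/s) *\<^sub>R w = A *v p" using that A(3) ph unfolding p_def by simp
    hence "s *\<^sub>R ((1/s) *\<^sub>R w) = w0" unfolding w0_def by simp
    thus ?thesis using sp by simp
  qed
  have "?P (fuchsian_ext n K y)"
    unfolding fuchsian_ext_def by (rule theI[of ?P w0, OF P0 uniq])
  thus ?thesis unfolding equidist_tangent_def by simp
qed

lemma nondeg:
  assumes "\<And>e. mink w e = 0" shows "w = 0"
proof -
  define e :: vec4 where "e = (\<chi> i. if i = 1 then - (w$i) else w$i)"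
  have "mink w e = (w$1)^2 + (w$2)^2 + (w$3)^2 + (w$4)^2"
    unfolding mink_def e_def by (simp add: power2_eq_square)
  hence "(w$1)^2 + (w$2)^2 + (w$3)^2 + (w$4)^2 = 0" using assms by simp
  hence "(w$1)^2 = 0 \<and> (w$2)^2 = 0 \<and> (w$3)^2 = 0 \<and> (w$4)^2 = 0"
    using zero_le_power2[of "w$1"] zero_le_power2[of "w$2"] zero_le_power2[of "w$3"] zero_le_power2[of "w$4"]
    by linarith
  hence "w$1 = 0 \<and> w$2 = 0 \<and> w$3 = 0 \<and> w$4 = 0" by simp
  hence "w$i = 0" for i using exhaust_4[of i] by metis
  thus ?thesis by (simp add: vec_eq_iff)
qed

lemma M_normal:
  assumes n: "mink n n = 1" and Mp: "\<And>x y. mink (M *v x) (M *v y) = mink x y"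
    and Mh: "(\<lambda>y. M *v y) ` hplane n = hplane n" and x0: "x0 \<in> hplane n"
  shows "M *v n = n \<or> M *v n = - n"
proof -
  define u where "u = M *v n"
  have uh: "mink u z = 0" if "z \<in> hplane n" for z
  proof -
    have "z \<in> (\<lambda>y. M *v y) ` hplane n" using that Mh by simp
    then obtain x where "x \<in> hplane n" "z = M *v x" by (rule imageE) simp
    thus ?thesis unfolding u_def using Mp[of n x] by (simp add: hplane_def)
  qed
  have x0p: "mink x0 x0 = -1" "x0$1 > 0" "mink n x0 = 0" using x0 by (auto simp: hplane_def H3_def)
  have uv: "mink u v = 0" if v: "mink n v = 0" for v
  proof -
    define a where "a = mink x0 v"
    define b where "b = mink v v"
    define t where "t = 1 / (1 + 2*\<bar>a\<bar> + \<bar>b\<bar>)"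
    have tp: "t > 0" "t \<le> 1" unfolding t_def by auto
    have tl: "t * (2*\<bar>a\<bar> + \<bar>b\<bar>) < 1" unfolding t_def by (simp add: field_simps)
    define xt where "xt = x0 + t *\<^sub>R v"
    define q where "q = mink xt xt"
    have qe: "q = -1 + 2*t*a + t*t*b"
      unfolding q_def xt_def a_def b_def using x0p(1) by (simp add: mink_simps mink_sym[of v x0] algebra_simps)
    have "t*t*b \<le> t * \<bar>b\<bar>"
    proof -
      have "t*t*b \<le> t*t*\<bar>b\<bar>" using tp by (simp add: mult_left_mono)
      also have "\<dots> \<le> 1*t*\<bar>b\<bar>" using tp by (intro mult_right_mono) auto
      finally show ?thesis by simp
    qed
    moreover have "2*t*a \<le> t*(2*\<bar>a\<bar>)" using tp by (simp add: mult_left_mono)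
    ultimately have qn: "q < 0" using qe tl by (simp add: algebra_simps)
    define c where "c = sqrt (-q)"
    have cp: "c > 0" and c2: "c*c = -q" unfolding c_def using qn by auto
    define z where "z = (1/c) *\<^sub>R xt"
    have zz: "mink z z = -1" unfolding z_def using cp c2 qn by (simp add: mink_simps q_def[symmetric] field_simps)
    have nz: "mink n z = 0" unfolding z_def xt_def using x0p v by (simp add: mink_simps)
    have "t * a < 1" using tl tp by (smt (verit) abs_ge_self mult_left_mono abs_ge_zero mult_nonneg_nonneg)
    hence "mink x0 z < 0" unfolding z_def xt_def a_def[symmetric] using cp x0p(1)
      by (simp add: mink_simps a_def[symmetric] field_simps)
    hence "z$1 > 0" using sheet[of x0 z] x0p zz by simp
    hence "z \<in> hplane n" using zz nz by (simp add: hplane_def H3_def)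
    hence "mink u z = 0" by (rule uh)
    hence "mink u xt = 0" unfolding z_def using cp by (simp add: mink_simps)
    moreover have "mink u x0 = 0" using uh x0 by simp
    ultimately show ?thesis unfolding xt_def using tp by (simp add: mink_simps)
  qed
  define w where "w = u - mink u n *\<^sub>R n"
  have "mink w e = 0" for e
  proof -
    have "mink n (e - mink n e *\<^sub>R n) = 0" using n by (simp add: mink_simps)
    hence "mink u (e - mink n e *\<^sub>R n) = 0" by (rule uv)
    thus ?thesis unfolding w_def by (simp add: mink_simps mink_sym[of n e] algebra_simps)
  qed
  hence "w = 0" by (rule nondeg)
  hence ue: "u = mink u n *\<^sub>R n" unfolding w_def by simp
  obtain k where k: "k = mink u n" by blast
  have ue': "u = k *\<^sub>R n" using ue k by simp
  have "mink u u = 1" unfolding u_def using Mp n by simp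
  hence "k * k * mink n n = 1" unfolding ue' by (simp add: mink_simps)
  hence "k^2 = 1" using n by (simp add: power2_eq_square)
  hence "k = 1 \<or> k = -1" by (simp add: power2_eq_1_iff)
  thus ?thesis using ue' unfolding u_def by auto
qed

lemma vert_M:
  assumes Mp: "\<And>x y. mink (M *v x) (M *v y) = mink x y"
    and Mn: "M *v n = sg *\<^sub>R n" and sg: "sg * sg = 1"
  shows "vert n (M *v y) = sg *\<^sub>R (M *v vert n y)"
proof -
  have nn: "n = sg *\<^sub>R (M *v n)" using Mn sg by simp
  have md: "mink n (M *v y) = sg * mink n y"
    by (subst nn) (simp add: mink_simps Mp)
  have sq: "(sg * mink n y)\<^sup>2 = (mink n y)\<^sup>2" using sg by (simp add: power2_eq_square algebra_simps)
  have "M *v y - (sg * mink n y) *\<^sub>R n = M *v (y - mink n y *\<^sub>R n)"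
    using Mn sg by (simp add: matrix_vector_mult_diff_distrib matrix_vector_mult_scaleR)
  hence pr: "proj n (M *v y) = M *v proj n y"
    unfolding proj_def md sq by (simp add: matrix_vector_mult_scaleR)
  show ?thesis unfolding vert_eq md sq pr
    using Mn sg by (simp add: matrix_vector_right_distrib matrix_vector_mult_scaleR algebra_simps)
qed

lemma hproj_M:
  assumes Mp: "\<And>x y. mink (M *v x) (M *v y) = mink x y"
    and V: "vert n (M *v y) = sg *\<^sub>R (M *v vert n y)" and sg: "sg * sg = 1"
  shows "hproj n (M *v y) (M *v w) = M *v hproj n y w"
proof -
  define v where "v = vert n y"
  have a: "mink (M *v w) (vert n (M *v y)) = sg * mink w v" unfolding V v_def by (simp add: mink_simps Mp)
  have b: "mink (vert n (M *v y)) (vert n (M *v y)) = mink v v" unfolding V v_def using sg by (simp add: mink_simps Mp)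
  have "hproj n (M *v y) (M *v w) = M *v w - ((sg * mink w v / mink v v) * sg) *\<^sub>R (M *v v)"
    unfolding hproj_def a b by (simp add: V v_def)
  also have "\<dots> = M *v w - (mink w v / mink v v) *\<^sub>R (M *v v)" using sg by (simp add: algebra_simps)
  also have "\<dots> = M *v hproj n y w" unfolding hproj_def v_def
    by (simp add: matrix_vector_mult_diff_distrib matrix_vector_mult_scaleR)
  finally show ?thesis .
qed

lemma hproj_F:
  assumes n: "mink n n = 1" and "mink y f = 0" "mink n f = 0"
  shows "hproj n y (f + z) = f + hproj n y z"
proof -
  have v: "vert n y = mink n y *\<^sub>R ((1 / sqrt (1 + (mink n y)\<^sup>2)) *\<^sub>R (y - mink n y *\<^sub>R n)) + sqrt (1 + (mink n y)\<^sup>2) *\<^sub>R n"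
    unfolding vert_eq proj_def ..
  have "mink f (vert n y) = 0" unfolding v using assms mink_sym[of y f] mink_sym[of n f]
    by (simp add: mink_simps)
  thus ?thesis unfolding hproj_def by (simp add: mink_simps algebra_simps)
qed

theorem corollary3:
  fixes n :: vec4 and Ms P :: "vec4 set" and F :: "mat4 set"
    and Z :: "vec4 \<Rightarrow> vec4" and Fv :: "mat4 \<Rightarrow> vec4 \<Rightarrow> vec4"
  assumes "convex_fuchsian_polyhedron n Ms P F"
    and "fuchsian_deformation n Ms P F Z Fv"
  shows "\<forall>M\<in>F. \<forall>y\<in>P. hproj n (M *v y) (Z (M *v y)) = M *v (Fv M y + hproj n y (Z y))"
proof (intro ballI)
  fix M y assume M: "M \<in> F" and y: "y \<in> P"
  have n: "mink n n = 1" using assms(1) unfolding convex_fuchsian_polyhedron_def unit_spacelike_def by simp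
  have PH: "P \<subseteq> H3" using assms(1) unfolding convex_fuchsian_polyhedron_def polyhedral_surface_def Let_def
    by blast
  have yH: "y \<in> H3" using PH y by blast
  have fg: "fuchsian_group n F" using assms(1) unfolding convex_fuchsian_polyhedron_def by simp
  have iso: "isom_plus M" and Mh: "(\<lambda>y. M *v y) ` hplane n = hplane n"
    using fg M unfolding fuchsian_group_def by auto
  have Mp: "\<And>x y. mink (M *v x) (M *v y) = mink x y" using iso unfolding isom_plus_def by blast
  have x0: "proj n y \<in> hplane n" using proj_props[OF n yH] by simp
  have Mn: "M *v n = n \<or> M *v n = - n" by (rule M_normal[OF n Mp Mh x0])
  obtain sg :: real where sg: "M *v n = sg *\<^sub>R n" "sg * sg = 1"
    using Mn by (metis mult_1 scaleR_one scaleR_minus1_left mult_minus_left mult_minus_right minus_minus)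
  have V: "vert n (M *v y) = sg *\<^sub>R (M *v vert n y)" by (rule vert_M[OF Mp sg])
  have ZM: "Z (M *v y) = M *v (Fv M y + Z y)" and fk: "fuchsian_killing n (Fv M)"
    using assms(2) M y unfolding fuchsian_deformation_def by auto
  obtain K where K: "killing_plane n K" "\<forall>x\<in>H3. Fv M x = fuchsian_ext n K x"
    using fk unfolding fuchsian_killing_def by blast
  have fe: "mink y (Fv M y) = 0" "mink n (Fv M y) = 0" using fext[OF n yH K(1)] K(2) yH by auto
  show "hproj n (M *v y) (Z (M *v y)) = M *v (Fv M y + hproj n y (Z y))"
    unfolding ZM hproj_M[OF Mp V sg(2)] hproj_F[OF n fe] ..
qed

end
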